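(* Let $G$ be a trigraph with underlying simple graph $H$. If $\operatorname{stww}(G)>\Delta(G)^2$, then $\operatorname{tww}(G)=\operatorname{tww}(H)$.
   Context: A trigraph is a finite simple graph whose edges are each colored red or black; a graph is viewed as a trigraph with all edges black, and the underlying simple graph of a trigraph forgets the colors. $\Delta(G)$ denotes the maximum degree of the underlying graph. The red degree of a vertex is the number of red edges incident to it. For a partition $\mathcal{P}$ of $V(G)$, the quotient trigraph $G/\mathcal{P}$ has vertex set $\mathcal{P}$; two distinct parts $U,W$ are joined by a black edge if every pair $\{u,w\}$ with $u\in U,w\in W$ is a black edge of $G$, are non-adjacent if no such pair is an edge, and are joined by a red edge otherwise. A contraction sequence of an $n$-vertex trigraph $G$ is a sequence $\mathcal{P}_n,\dots,\mathcal{P}_1$ of partitions of $V(G)$ where $\mathcal{P}_n$ is the partition into singletons and each $\mathcal{P}_i$ arises from $\mathcal{P}_{i+1}$ by merging two parts; its width is the maximum red degree over all $G/\mathcal{P}_i$, and $\operatorname{tww}(G)$ is the minimum width of a contraction sequence. The sparse twin-width is $\operatorname{stww}(G)\coloneqq\operatorname{tww}(G_{\mathrm{red}})$, where $G_{\mathrm{red}}$ is obtained from $G$ by coloring all edges red. *)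

theory Defs
  imports Main
begin

text \<open>A trigraph on a vertex type 'a is given by a finite vertex set V, a set B of black
edges and a set R of red edges; edges are 2-element subsets of V, and B, R are disjoint.\<close>

definition trigraph :: "'a set \<Rightarrow> 'a set set \<Rightarrow> 'a set set \<Rightarrow> bool" where
  "trigraph V B R \<longleftrightarrow> finite V \<and>
     (\<forall>e\<in>B \<union> R. e \<subseteq> V \<and> card e = 2) \<and> B \<inter> R = {}"

definition max_degree :: "'a set \<Rightarrow> 'a set set \<Rightarrow> 'a set set \<Rightarrow> nat" where
  "max_degree V B R = Max (insert 0 ((\<lambda>v. card {w. {v, w} \<in> B \<union> R}) ` V))"

definition quot_red :: "'a set set \<Rightarrow> 'a set set \<Rightarrow> 'a set \<Rightarrow> 'a set \<Rightarrow> bool" where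
  "quot_red B R U W \<longleftrightarrow>
     \<not> (\<forall>u\<in>U. \<forall>w\<in>W. {u, w} \<in> B) \<and> (\<exists>u\<in>U. \<exists>w\<in>W. {u, w} \<in> B \<union> R)"

definition quot_red_degree :: "'a set set \<Rightarrow> 'a set set \<Rightarrow> 'a set set \<Rightarrow> 'a set \<Rightarrow> nat" where
  "quot_red_degree B R P U = card {W \<in> P. W \<noteq> U \<and> quot_red B R U W}"

text \<open>A contraction sequence P_n, ..., P_1 (n = card V), indexed by i.\<close>
definition contraction_sequence :: "'a set \<Rightarrow> (nat \<Rightarrow> 'a set set) \<Rightarrow> bool" where
  "contraction_sequence V P \<longleftrightarrow>
     P (card V) = (\<lambda>v. {v}) ` V \<and>
     (\<forall>i. 1 \<le> i \<and> i < card V \<longrightarrow>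
        (\<exists>X Y. X \<in> P (Suc i) \<and> Y \<in> P (Suc i) \<and> X \<noteq> Y \<and>
               P i = insert (X \<union> Y) (P (Suc i) - {X, Y})))"

definition seq_width_le :: "'a set \<Rightarrow> 'a set set \<Rightarrow> 'a set set \<Rightarrow> (nat \<Rightarrow> 'a set set) \<Rightarrow> nat \<Rightarrow> bool" where
  "seq_width_le V B R P k \<longleftrightarrow>
     (\<forall>i\<in>{1..card V}. \<forall>U\<in>P i. quot_red_degree B R (P i) U \<le> k)"

definition tww :: "'a set \<Rightarrow> 'a set set \<Rightarrow> 'a set set \<Rightarrow> nat" where
  "tww V B R = (LEAST k. \<exists>P. contraction_sequence V P \<and> seq_width_le V B R P k)"

text \<open>Sparse twin-width: twin-width of G with all edges coloured red.\<close>
definition stww :: "'a set \<Rightarrow> 'a set set \<Rightarrow> 'a set set \<Rightarrow> nat" where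
  "stww V B R = tww V {} (B \<union> R)"

end

theory Submission
  imports Defs
begin

lemma cs_props:
  assumes fin: "finite V" and cs: "contraction_sequence V P"
    and i1: "1 \<le> i" and iV: "i \<le> card V"
  shows "finite (P i) \<and> (\<forall>X\<in>P i. X \<subseteq> V) \<and> (\<forall>X\<in>P i. \<forall>Y\<in>P i. X \<noteq> Y \<longrightarrow> X \<inter> Y = {})"
  using iV
proof (induction i rule: inc_induct)
  case base
  have "P (card V) = (\<lambda>v. {v}) ` V" using cs unfolding contraction_sequence_def by blast
  then show ?case using fin by auto
next
  case (step n)
  have "1 \<le> n" using i1 step.hyps by simp
  then have "\<exists>X Y. X \<in> P (Suc n) \<and> Y \<in> P (Suc n) \<and> X \<noteq> Y \<and>
               P n = insert (X \<union> Y) (P (Suc n) - {X, Y})"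
    using cs step.hyps unfolding contraction_sequence_def by simp
  then obtain X Y where XY: "X \<in> P (Suc n)" "Y \<in> P (Suc n)" "X \<noteq> Y"
    "P n = insert (X \<union> Y) (P (Suc n) - {X, Y})" by blast
  have IH1: "finite (P (Suc n))" and IH2: "\<forall>X\<in>P (Suc n). X \<subseteq> V"
    and D: "\<And>A C. A \<in> P (Suc n) \<Longrightarrow> C \<in> P (Suc n) \<Longrightarrow> A \<noteq> C \<Longrightarrow> A \<inter> C = {}"
    using step.IH by auto
  show ?case
  proof (intro conjI)
    show "finite (P n)" using XY(4) IH1 by simp
    show "\<forall>Z\<in>P n. Z \<subseteq> V" using XY(1,2,4) IH2 by auto
    show "\<forall>Z\<in>P n. \<forall>Z'\<in>P n. Z \<noteq> Z' \<longrightarrow> Z \<inter> Z' = {}"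
    proof (intro ballI impI)
      fix Z Z' assume Z: "Z \<in> P n" "Z' \<in> P n" "Z \<noteq> Z'"
      show "Z \<inter> Z' = {}"
      proof (cases "Z = X \<union> Y")
        case True
        then have "Z' \<in> P (Suc n)" "Z' \<noteq> X" "Z' \<noteq> Y" using Z XY(4) by auto
        then show ?thesis using True D[OF XY(1), of Z'] D[OF XY(2), of Z'] by auto
      next
        case False
        then have Zo: "Z \<in> P (Suc n)" "Z \<noteq> X" "Z \<noteq> Y" using Z XY(4) by auto
        show ?thesis
        proof (cases "Z' = X \<union> Y")
          case True
          then show ?thesis using D[OF Zo(1) XY(1)] D[OF Zo(1) XY(2)] Zo by auto
        next
          case False
          then have "Z' \<in> P (Suc n)" using Z XY(4) by auto
          then show ?thesis using D[OF Zo(1)] Z(3) by blast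
        qed
      qed
    qed
  qed
qed

lemma qr_mono1: "quot_red (B \<union> R) {} U W \<Longrightarrow> quot_red B R U W"
  unfolding quot_red_def by blast

lemma qr_mono2: "quot_red B R U W \<Longrightarrow> quot_red {} (B \<union> R) U W"
  unfolding quot_red_def by blast

lemma deg_le_max:
  assumes "trigraph V B R" "v \<in> V"
  shows "card {w. {v, w} \<in> B \<union> R} \<le> max_degree V B R"
  unfolding max_degree_def
  using assms by (intro Max_ge) (auto simp: trigraph_def)

lemma nbr_finite:
  assumes "trigraph V B R"
  shows "finite {w. {v, w} \<in> B \<union> R}"
proof -
  have "{w. {v, w} \<in> B \<union> R} \<subseteq> V" using assms unfolding trigraph_def by blast
  then show ?thesis using assms unfolding trigraph_def by (meson finite_subset)
qed

lemma key:
  assumes tg: "trigraph V B R" and finP: "finite P" and sub: "\<forall>X\<in>P. X \<subseteq> V"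
    and disj: "\<forall>X\<in>P. \<forall>Y\<in>P. X \<noteq> Y \<longrightarrow> X \<inter> Y = {}" and U: "U \<in> P"
  shows "quot_red_degree {} (B \<union> R) P U
          \<le> max (quot_red_degree (B \<union> R) {} P U) ((max_degree V B R)^2)"
proof -
  define E where "E = B \<union> R"
  define \<Delta> where "\<Delta> = max_degree V B R"
  define N where "N x = {y. {x, y} \<in> E}" for x
  define S1 where "S1 = {W \<in> P. W \<noteq> U \<and> quot_red {} E U W}"
  define S2 where "S2 = {W \<in> P. W \<noteq> U \<and> quot_red E {} U W}"
  have finN: "finite (N x)" for x using nbr_finite[OF tg] unfolding N_def E_def by blast
  have degN: "x \<in> V \<Longrightarrow> card (N x) \<le> \<Delta>" for x
    using deg_le_max[OF tg] unfolding N_def E_def \<Delta>_def by blast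
  have UV: "U \<subseteq> V" using sub U by blast
  have finU: "finite U" using UV tg unfolding trigraph_def by (meson finite_subset)
  show ?thesis
  proof (cases "\<exists>W\<in>P. W \<noteq> U \<and> (\<forall>u\<in>U. \<forall>w\<in>W. {u, w} \<in> E) \<and> (\<exists>u\<in>U. \<exists>w\<in>W. {u, w} \<in> E)")
    case True
    then obtain W w where W: "W \<in> P" "w \<in> W" "\<forall>u\<in>U. {u, w} \<in> E" by blast
    have wV: "w \<in> V" using W sub by blast
    have "U \<subseteq> N w" using W(3) unfolding N_def by (auto simp: insert_commute)
    then have cU: "card U \<le> \<Delta>" using card_mono[OF finN] degN[OF wV] by (meson le_trans)
    define NU where "NU = (\<Union>u\<in>U. N u)"
    have finNU: "finite NU" unfolding NU_def using finU finN by blast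
    have "S1 \<subseteq> (\<Union>x\<in>NU. {W'\<in>P. x \<in> W'})"
      unfolding S1_def NU_def N_def quot_red_def by blast
    then have "card S1 \<le> card (\<Union>x\<in>NU. {W'\<in>P. x \<in> W'})"
      using finP finNU by (intro card_mono) auto
    also have "\<dots> \<le> (\<Sum>x\<in>NU. card {W'\<in>P. x \<in> W'})"
      using finNU by (rule card_UN_le)
    also have "\<dots> \<le> (\<Sum>x\<in>NU. 1)"
    proof (rule sum_mono)
      fix x assume "x \<in> NU"
      have fx: "finite {W'\<in>P. x \<in> W'}" using finP by simp
      have "card {W'\<in>P. x \<in> W'} \<le> Suc 0"
        using card_le_Suc0_iff_eq[OF fx] disj by blast
      then show "card {W'\<in>P. x \<in> W'} \<le> 1" by simp
    qed
    also have "\<dots> = card NU" by simp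
    also have "\<dots> \<le> (\<Sum>u\<in>U. card (N u))" unfolding NU_def using finU by (rule card_UN_le)
    also have "\<dots> \<le> (\<Sum>u\<in>U. \<Delta>)" using degN UV by (intro sum_mono) auto
    also have "\<dots> = card U * \<Delta>" by simp
    also have "\<dots> \<le> \<Delta> * \<Delta>" using cU by simp
    finally have "card S1 \<le> \<Delta>^2" by (simp add: power2_eq_square)
    then show ?thesis unfolding quot_red_degree_def S1_def E_def \<Delta>_def by simp
  next
    case False
    have "S1 = S2" unfolding S1_def S2_def quot_red_def using False by blast
    then show ?thesis unfolding quot_red_degree_def S1_def S2_def E_def by simp
  qed
qed

theorem mainTheorem11:
  fixes V :: "'a set" and B R :: "'a set set"
  assumes "trigraph V B R"
    and "stww V B R > (max_degree V B R)^2"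
  shows "tww V B R = tww V (B \<union> R) {}"
proof -
  define d where "d = (max_degree V B R)^2"
  define QG where "QG k = (\<exists>P. contraction_sequence V P \<and> seq_width_le V B R P k)" for k
  define QH where "QH k = (\<exists>P. contraction_sequence V P \<and> seq_width_le V (B \<union> R) {} P k)" for k
  define QS where "QS k = (\<exists>P. contraction_sequence V P \<and> seq_width_le V {} (B \<union> R) P k)" for k
  have fin: "finite V" using assms(1) unfolding trigraph_def by simp
  have props: "finite (P i) \<and> (\<forall>X\<in>P i. X \<subseteq> V) \<and> (\<forall>X\<in>P i. \<forall>Y\<in>P i. X \<noteq> Y \<longrightarrow> X \<inter> Y = {})"
    if "contraction_sequence V P" "i \<in> {1..card V}" for P i
  proof -
    have "1 \<le> i" "i \<le> card V" using that(2) by auto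
    then show ?thesis by (rule cs_props[OF fin that(1)])
  qed
  have SG: "QS k \<Longrightarrow> QG k" for k
  proof -
    assume "QS k"
    then obtain P where P: "contraction_sequence V P" "seq_width_le V {} (B \<union> R) P k"
      unfolding QS_def by blast
    have "seq_width_le V B R P k" unfolding seq_width_le_def
    proof (intro ballI)
      fix i U assume i: "i \<in> {1..card V}" and U: "U \<in> P i"
      have "quot_red_degree B R (P i) U \<le> quot_red_degree {} (B \<union> R) (P i) U"
        unfolding quot_red_degree_def using props[OF P(1) i] qr_mono2
        by (intro card_mono) auto
      also have "\<dots> \<le> k" using P(2) i U unfolding seq_width_le_def by blast
      finally show "quot_red_degree B R (P i) U \<le> k" .
    qed
    then show "QG k" unfolding QG_def using P(1) by blast
  qed
  have GH: "QG k \<Longrightarrow> QH k" for k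
  proof -
    assume "QG k"
    then obtain P where P: "contraction_sequence V P" "seq_width_le V B R P k"
      unfolding QG_def by blast
    have "seq_width_le V (B \<union> R) {} P k" unfolding seq_width_le_def
    proof (intro ballI)
      fix i U assume i: "i \<in> {1..card V}" and U: "U \<in> P i"
      have "quot_red_degree (B \<union> R) {} (P i) U \<le> quot_red_degree B R (P i) U"
        unfolding quot_red_degree_def using props[OF P(1) i] qr_mono1
        by (intro card_mono) auto
      also have "\<dots> \<le> k" using P(2) i U unfolding seq_width_le_def by blast
      finally show "quot_red_degree (B \<union> R) {} (P i) U \<le> k" .
    qed
    then show "QH k" unfolding QH_def using P(1) by blast
  qed
  have HS: "QH k \<Longrightarrow> QS (max k d)" for k
  proof -
    assume "QH k"
    then obtain P where P: "contraction_sequence V P" "seq_width_le V (B \<union> R) {} P k"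
      unfolding QH_def by blast
    have "seq_width_le V {} (B \<union> R) P (max k d)" unfolding seq_width_le_def
    proof (intro ballI)
      fix i U assume i: "i \<in> {1..card V}" and U: "U \<in> P i"
      have "quot_red_degree {} (B \<union> R) (P i) U
          \<le> max (quot_red_degree (B \<union> R) {} (P i) U) d"
        unfolding d_def using key[OF assms(1) _ _ _ U] props[OF P(1) i] by blast
      also have "\<dots> \<le> max k d"
      proof -
        have "quot_red_degree (B \<union> R) {} (P i) U \<le> k"
          using P(2) i U unfolding seq_width_le_def by blast
        then show ?thesis by simp
      qed
      finally show "quot_red_degree {} (B \<union> R) (P i) U \<le> max k d" .
    qed
    then show "QS (max k d)" unfolding QS_def using P(1) by blast
  qed
  have tG: "tww V B R = Least QG" unfolding tww_def QG_def by simp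
  have tH: "tww V (B \<union> R) {} = Least QH" unfolding tww_def QH_def by simp
  have tS: "stww V B R = Least QS" unfolding stww_def tww_def QS_def by simp
  show ?thesis
  proof (cases "\<exists>k. QS k")
    case True
    then obtain k0 where k0: "QS k0" by blast
    have s: "QS (Least QS)" using k0 by (rule LeastI)
    have h: "QH (Least QH)" using GH[OF SG[OF k0]] by (rule LeastI)
    have g: "QG (Least QG)" using SG[OF k0] by (rule LeastI)
    have "Least QS \<le> max (Least QH) d" using HS[OF h] by (rule Least_le)
    moreover have "Least QS > d" using assms(2) tS d_def by simp
    ultimately have a: "Least QS \<le> Least QH" by simp
    have b: "Least QG \<le> Least QS" using SG[OF s] by (rule Least_le)
    have c: "Least QH \<le> Least QG" using GH[OF g] by (rule Least_le)
    show ?thesis using a b c tG tH by simp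
  next
    case False
    then have "\<forall>k. \<not> QH k" using HS by blast
    moreover have "\<forall>k. \<not> QG k" using False HS GH by blast
    ultimately have "QG = QH" by auto
    then show ?thesis using tG tH by simp
  qed
qed

end
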